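(* Assume $\delta d_0>2$, let $t=d_0/2$, $\varepsilon_0=\frac{d_0}{2}-\frac1\delta$, and $\gamma=\left(1+\frac ct\right)^{-1}\frac{\delta d_0-1}{d_0-1}\alpha$. Let $G=(L\cup R,E)$ be a $(c,d,\alpha,\delta)$-bipartite expander with $L=[n]$, $C_0\subseteq\mathbb{F}_2^d$ a linear code of minimum distance $d_0$, $x\in\mathbb{F}_2^n$ and $y\in T(G,C_0)$ with $d_H(x,y)\le\gamma n$. Then $\mathsf{DeepFlip}(x)$ outputs an element $x'\in\mathbb{F}_2^n$, in $O(|F(x,y)|)$ time, such that $|F(x',y)|\le\frac12|F(x,y)|$.
   Context: Binary linear codes, Hamming distance $d_H$. A bipartite graph $G=(L\cup R,E)$ is $(c,d)$-regular if left degrees are $c$ and right degrees $d$; $N(S)$ is the neighborhood of $S$. A $(c,d,\alpha,\delta)$-bipartite expander ($c,d$ positive integers, $\alpha,\delta\in(0,1]$, all constants) is a $(c,d)$-regular bipartite graph with $|N(S)|\ge\delta c|S|$ for every $S\subseteq L$, $|S|\le\alpha|L|$. Tanner code: $L=[n]$, for each $v\in R$ a fixed ordering of $N(v)$ defines $x_{N(v)}\in\mathbb{F}_2^d$, and $T(G,C_0)=\{x: x_{N(v)}\in C_0\ \forall v\in R\}$. $F(x,y)=\{i\in[n]:x_i\ne y_i\}$; $U(x)=\{v\in R: x_{N(v)}\notin C_0\}$. $\mathsf{Decode}(z)$ for $z\in\mathbb{F}_2^d$ is the codeword of $C_0$ closest to $z$, ties broken lexicographically. $W=\{\frac{i}{cd_0}: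 i\in\mathbb{Z},0\le i\le cd_0\}$. $\mathsf{DeterFlip}(x,q)$ for $q\in\mathbb{R}$: set $p_1=\dots=p_n=0$; for each $v\in R$, let $w_v=\mathsf{Decode}(x_{N(v)})$; if $1\le d_H(w_v,x_{N(v)})<t$, let $i$ be the smallest element of $N(v)$ where $w_v$ and $x_{N(v)}$ differ and increase $p_i$ by $\frac{t-d_H(w_v,x_{N(v)})}{ct}$; then flip every $x_i$ with $p_i=q$ and return the result. $\mathsf{DeepFlip}(x)$: let $\varepsilon=\frac{\varepsilon_0\delta}{2ct^2}$ and $s=\left\lceil\log\left(\frac{\delta d_0-1}{2(d_0-1)}\right)/\log(1-\varepsilon)\right\rceil$; set $k_{\min}=|R|+1$, $x_{\min}=\perp$. For each $(q_1,\dots,q_s)\in(W\setminus\{0\})^s$: set $x^{(0)}=x$ and for $i=1,\dots,s$ set $x^{(i)}=\mathsf{DeterFlip}(x^{(i-1)},q_i)$; if $|U(x^{(i)})|>c\gamma n$ abandon this sequence; otherwise, if $i=s$ and $|U(x^{(s)})|<k_{\min}$, set $k_{\min}=|U(x^{(s)})|$ and $x_{\min}=x^{(s)}$. Return $x_{\min}$. Running time is in the RAM model with adjacency lists, with $U(x)$ and the $p_i$ maintained in data structures (initialized once beforehand) allowing $U(x)$ to be enumerated in $O(|U(x)|)$ time and updated in $O(1)$ time per bit flip; constants may depend on $c,d,\alpha,\delta,C_0$. *)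

theory Defs
  imports Complex_Main
begin

text \<open>Binary words are bool lists (False = 0, True = 1); addition over F_2 is xor.
  Left vertices are 0..<n, right vertices are a finite set R of naturals, and
  nbr v is the fixed ordering of N(v).\<close>

definition hdist :: "bool list \<Rightarrow> bool list \<Rightarrow> nat" where
  "hdist a b = card {i. i < length a \<and> a ! i \<noteq> b ! i}"

definition Fset :: "nat \<Rightarrow> bool list \<Rightarrow> bool list \<Rightarrow> nat set" where
  "Fset n x y = {i. i < n \<and> x ! i \<noteq> y ! i}"

definition linear_code :: "nat \<Rightarrow> bool list set \<Rightarrow> bool" where
  "linear_code d C0 \<longleftrightarrow> C0 \<noteq> {} \<and> (\<forall>w\<in>C0. length w = d)
     \<and> (\<forall>a\<in>C0. \<forall>b\<in>C0. map2 (\<noteq>) a b \<in> C0)"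

definition min_dist :: "bool list set \<Rightarrow> nat \<Rightarrow> bool" where
  "min_dist C0 d0 \<longleftrightarrow> (\<exists>a\<in>C0. \<exists>b\<in>C0. a \<noteq> b \<and> hdist a b = d0)
     \<and> (\<forall>a\<in>C0. \<forall>b\<in>C0. a \<noteq> b \<longrightarrow> d0 \<le> hdist a b)"

definition restr :: "(nat \<Rightarrow> nat list) \<Rightarrow> bool list \<Rightarrow> nat \<Rightarrow> bool list" where
  "restr nbr x v = map (\<lambda>i. x ! i) (nbr v)"

definition Nb :: "nat set \<Rightarrow> (nat \<Rightarrow> nat list) \<Rightarrow> nat set \<Rightarrow> nat set" where
  "Nb R nbr S = {v \<in> R. \<exists>i\<in>S. i \<in> set (nbr v)}"

definition bipartite_expander ::
  "nat \<Rightarrow> nat set \<Rightarrow> (nat \<Rightarrow> nat list) \<Rightarrow> nat \<Rightarrow> nat \<Rightarrow> real \<Rightarrow> real \<Rightarrow> bool" where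
  "bipartite_expander n R nbr c d \<alpha> \<delta> \<longleftrightarrow>
     finite R
     \<and> (\<forall>v\<in>R. length (nbr v) = d \<and> distinct (nbr v) \<and> set (nbr v) \<subseteq> {..<n})
     \<and> (\<forall>i<n. card {v\<in>R. i \<in> set (nbr v)} = c)
     \<and> (\<forall>S. S \<subseteq> {..<n} \<longrightarrow> real (card S) \<le> \<alpha> * real n
            \<longrightarrow> real (card (Nb R nbr S)) \<ge> \<delta> * real c * real (card S))"

definition tanner :: "nat \<Rightarrow> nat set \<Rightarrow> (nat \<Rightarrow> nat list) \<Rightarrow> bool list set \<Rightarrow> bool list set" where
  "tanner n R nbr C0 = {x. length x = n \<and> (\<forall>v\<in>R. restr nbr x v \<in> C0)}"

definition Uset :: "nat set \<Rightarrow> (nat \<Rightarrow> nat list) \<Rightarrow> bool list set \<Rightarrow> bool list \<Rightarrow> nat set" where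
  "Uset R nbr C0 x = {v\<in>R. restr nbr x v \<notin> C0}"

definition decode :: "bool list set \<Rightarrow> bool list \<Rightarrow> bool list" where
  "decode C0 z = (let M = {w\<in>C0. \<forall>w'\<in>C0. hdist w z \<le> hdist w' z} in
     THE w. w \<in> M \<and> (\<forall>w'\<in>M. w = w' \<or> ord_class.lexordp w w'))"

definition pval :: "nat set \<Rightarrow> (nat \<Rightarrow> nat list) \<Rightarrow> bool list set \<Rightarrow> nat \<Rightarrow> real
     \<Rightarrow> bool list \<Rightarrow> nat \<Rightarrow> real" where
  "pval R nbr C0 c t x i =
     (\<Sum>v\<in>{v\<in>R. let w = decode C0 (restr nbr x v); h = hdist w (restr nbr x v) in
              1 \<le> h \<and> real h < t \<and>
              i = Min {nbr v ! k | k. k < length (nbr v) \<and> w ! k \<noteq> x ! (nbr v ! k)}}.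
        (t - real (hdist (decode C0 (restr nbr x v)) (restr nbr x v))) / (real c * t))"

definition deterflip :: "nat \<Rightarrow> nat set \<Rightarrow> (nat \<Rightarrow> nat list) \<Rightarrow> bool list set \<Rightarrow> nat
     \<Rightarrow> real \<Rightarrow> bool list \<Rightarrow> real \<Rightarrow> bool list" where
  "deterflip n R nbr C0 c t x q =
     map (\<lambda>i. if pval R nbr C0 c t x i = q then \<not> (x ! i) else x ! i) [0..<n]"

text \<open>Abstract cost of one DeterFlip call together with the subsequent abandon test,
  in the model where U(x) is maintained: O(1 + |U(x)| + |U(x')|) (every flipped bit is
  charged to a distinct unsatisfied check of the input).\<close>
definition step_cost :: "nat set \<Rightarrow> (nat \<Rightarrow> nat list) \<Rightarrow> bool list set
     \<Rightarrow> bool list \<Rightarrow> bool list \<Rightarrow> nat" where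
  "step_cost R nbr C0 x x' = 1 + card (Uset R nbr C0 x) + card (Uset R nbr C0 x')"

text \<open>Running one sequence (q_1,...,q_s): result (None = abandoned) and cost.\<close>
fun run_seq :: "nat \<Rightarrow> nat set \<Rightarrow> (nat \<Rightarrow> nat list) \<Rightarrow> bool list set \<Rightarrow> nat \<Rightarrow> real
     \<Rightarrow> real \<Rightarrow> bool list \<Rightarrow> real list \<Rightarrow> bool list option \<times> nat" where
  "run_seq n R nbr C0 c t \<gamma> x [] = (Some x, 0)"
| "run_seq n R nbr C0 c t \<gamma> x (q # qs) =
     (let x' = deterflip n R nbr C0 c t x q; k = step_cost R nbr C0 x x' in
      if real (card (Uset R nbr C0 x')) > real c * \<gamma> * real n then (None, k)
      else (let (r, k') = run_seq n R nbr C0 c t \<gamma> x' qs in (r, k + k')))"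

text \<open>DeepFlip, with the sequences of (W - {0})^s processed in the order of the list
  seqs; state = (k_min, x_min, accumulated cost).\<close>
definition deepflip_run :: "nat \<Rightarrow> nat set \<Rightarrow> (nat \<Rightarrow> nat list) \<Rightarrow> bool list set \<Rightarrow> nat
     \<Rightarrow> real \<Rightarrow> real \<Rightarrow> real list list \<Rightarrow> bool list \<Rightarrow> bool list option \<times> nat" where
  "deepflip_run n R nbr C0 c t \<gamma> seqs x =
     (let (kmin, xmin, cost) =
        fold (\<lambda>qs (kmin, xmin, cost).
                 let (r, k) = run_seq n R nbr C0 c t \<gamma> x qs in
                 (case r of
                    Some xs \<Rightarrow> if card (Uset R nbr C0 xs) < kmin
                               then (card (Uset R nbr C0 xs), Some xs, cost + k)
                               else (kmin, xmin, cost + k)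
                  | None \<Rightarrow> (kmin, xmin, cost + k)))
             seqs (card R + 1, None, 0)
      in (xmin, cost))"

definition Wset :: "nat \<Rightarrow> nat \<Rightarrow> real set" where
  "Wset c d0 = {real i / (real c * real d0) | i. i \<le> c * d0}"

end

theory Submission imports Defs begin

lemma hdist_sym: "length a = length b \<Longrightarrow> hdist a b = hdist b a"
  unfolding hdist_def by (metis (no_types, lifting))

lemma hdist_tri:
  assumes "length a = length b" "length b = length c"
  shows "hdist a c \<le> hdist a b + hdist b c"
proof -
  have "{i. i < length a \<and> a ! i \<noteq> c ! i} \<subseteq> {i. i < length a \<and> a ! i \<noteq> b ! i} \<union> {i. i < length b \<and> b ! i \<noteq> c ! i}"
    using assms by auto
  then have "card {i. i < length a \<and> a ! i \<noteq> c ! i} \<le> card ({i. i < length a \<and> a ! i \<noteq> b ! i} \<union> {i. i < length b \<and> b ! i \<noteq> c ! i})"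
    by (intro card_mono) auto
  also have "\<dots> \<le> card {i. i < length a \<and> a ! i \<noteq> b ! i} + card {i. i < length b \<and> b ! i \<noteq> c ! i}"
    by (rule card_Un_le)
  finally show ?thesis unfolding hdist_def .
qed

lemma hdist_zero: "length a = length b \<Longrightarrow> hdist a b = 0 \<Longrightarrow> a = b"
  unfolding hdist_def by (auto intro: nth_equalityI)

lemma hdist_self: "hdist a a = 0"
  unfolding hdist_def by auto

lemma lex_min_exists:
  fixes M :: "bool list set"
  assumes "finite M" "M \<noteq> {}"
  shows "\<exists>w\<in>M. \<forall>w'\<in>M. w = w' \<or> ord_class.lexordp w w'"
  using assms
proof (induction M rule: finite_ne_induct)
  case (singleton x) then show ?case by auto
next
  case (insert x F)
  then obtain w where w: "w \<in> F" "\<forall>w'\<in>F. w = w' \<or> ord_class.lexordp w w'" by auto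
  show ?case
  proof (cases "ord_class.lexordp x w")
    case True
    then show ?thesis using w by (auto intro: lexordp_trans)
  next
    case False
    then have "w = x \<or> ord_class.lexordp w x" using lexordp_linear by blast
    then show ?thesis using w by auto
  qed
qed

lemma decode_props:
  assumes "finite C0" "C0 \<noteq> {}"
  shows "decode C0 z \<in> C0 \<and> (\<forall>w\<in>C0. hdist (decode C0 z) z \<le> hdist w z)"
proof -
  define M where "M = {w\<in>C0. \<forall>w'\<in>C0. hdist w z \<le> hdist w' z}"
  define m where "m = Min ((\<lambda>w. hdist w z) ` C0)"
  have "m \<in> (\<lambda>w. hdist w z) ` C0" unfolding m_def using assms by auto
  then obtain w0 where "w0 \<in> C0" "hdist w0 z = m" by auto
  moreover have "\<forall>w'\<in>C0. m \<le> hdist w' z" unfolding m_def using assms by auto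
  ultimately have "w0 \<in> M" unfolding M_def by auto
  then have "M \<noteq> {}" by auto
  moreover have "finite M" unfolding M_def using assms by auto
  ultimately obtain w where w: "w \<in> M" "\<forall>w'\<in>M. w = w' \<or> ord_class.lexordp w w'"
    using lex_min_exists by blast
  have uniq: "\<exists>!w. w \<in> M \<and> (\<forall>w'\<in>M. w = w' \<or> ord_class.lexordp w w')"
  proof (rule ex1I[of _ w])
    show "w \<in> M \<and> (\<forall>w'\<in>M. w = w' \<or> ord_class.lexordp w w')" using w by auto
  next
    fix u assume u: "u \<in> M \<and> (\<forall>w'\<in>M. u = w' \<or> ord_class.lexordp u w')"
    have a: "u = w \<or> ord_class.lexordp u w" using u w(1) by auto
    have b: "w = u \<or> ord_class.lexordp w u" using u w(2) by auto
    show "u = w"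
    proof (rule ccontr)
      assume "u \<noteq> w"
      then have "ord_class.lexordp u w" "ord_class.lexordp w u" using a b by auto
      then show False by (rule lexordp_antisym)
    qed
  qed
  have "decode C0 z = (THE w. w \<in> M \<and> (\<forall>w'\<in>M. w = w' \<or> ord_class.lexordp w w'))"
    unfolding decode_def M_def Let_def by simp
  then have "decode C0 z \<in> M" using theI'[OF uniq] by simp
  then show ?thesis unfolding M_def by auto
qed


lemma finite_lists_d: "finite {w::bool list. length w = d}"
proof -
  have "finite {xs::bool list. set xs \<subseteq> UNIV \<and> length xs = d}"
    by (rule finite_lists_length_eq) simp
  then show ?thesis by simp
qed

locale tsetup =
  fixes n :: nat and R :: "nat set" and nbr :: "nat \<Rightarrow> nat list" and c d d0 :: nat
    and \<alpha> \<delta> :: real and C0 :: "bool list set" and y :: "bool list"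
  assumes exp: "bipartite_expander n R nbr c d \<alpha> \<delta>"
    and lc: "linear_code d C0" and md: "min_dist C0 d0"
    and cpos: "0 < c" and dpos: "0 < \<delta>" and dle: "\<delta> \<le> 1" and dd: "\<delta> * real d0 > 2"
    and yT: "y \<in> tanner n R nbr C0" and apos: "0 < \<alpha>"
begin

abbreviation "t \<equiv> real d0 / 2"
definition "FF x = Fset n x y"
definition "e x v = card (set (nbr v) \<inter> FF x)"
definition "dec x v = decode C0 (restr nbr x v)"
definition "hh x v = hdist (dec x v) (restr nbr x v)"
definition "act x v \<longleftrightarrow> 1 \<le> hh x v \<and> real (hh x v) < t"
definition "tgt x v = Min {nbr v ! k | k. k < length (nbr v) \<and> dec x v ! k \<noteq> x ! (nbr v ! k)}"
definition "wt x v = (t - real (hh x v)) / (real c * t)"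
definition "NB x = Nb R nbr (FF x)"

lemma Rfin: "finite R" using exp unfolding bipartite_expander_def by auto
lemma nbr_len: "v \<in> R \<Longrightarrow> length (nbr v) = d" using exp unfolding bipartite_expander_def by auto
lemma nbr_dist: "v \<in> R \<Longrightarrow> distinct (nbr v)" using exp unfolding bipartite_expander_def by auto
lemma nbr_sub: "v \<in> R \<Longrightarrow> set (nbr v) \<subseteq> {..<n}" using exp unfolding bipartite_expander_def by auto
lemma deg: "i < n \<Longrightarrow> card {v\<in>R. i \<in> set (nbr v)} = c" using exp unfolding bipartite_expander_def by auto
lemma expand: "S \<subseteq> {..<n} \<Longrightarrow> real (card S) \<le> \<alpha> * real n \<Longrightarrow> real (card (Nb R nbr S)) \<ge> \<delta> * real c * real (card S)"
  using exp unfolding bipartite_expander_def by auto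

lemma C0_len: "w \<in> C0 \<Longrightarrow> length w = d" using lc unfolding linear_code_def by auto
lemma C0_ne: "C0 \<noteq> {}" using lc unfolding linear_code_def by auto
lemma C0_fin: "finite C0"
  by (rule finite_subset[OF _ finite_lists_d[of d]]) (auto simp: C0_len)
lemma C0_dist: "a \<in> C0 \<Longrightarrow> b \<in> C0 \<Longrightarrow> a \<noteq> b \<Longrightarrow> d0 \<le> hdist a b"
  using md unfolding min_dist_def by auto

lemma d0_gt2: "real d0 > 2"
proof -
  have "\<delta> * real d0 \<le> 1 * real d0" by (rule mult_right_mono) (use dle in auto)
  then show ?thesis using dd by linarith
qed

lemma y_len: "length y = n" using yT unfolding tanner_def by auto
lemma y_code: "v \<in> R \<Longrightarrow> restr nbr y v \<in> C0" using yT unfolding tanner_def by auto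
lemma restr_len[simp]: "length (restr nbr x v) = length (nbr v)" unfolding restr_def by simp
lemma restr_nth: "k < length (nbr v) \<Longrightarrow> restr nbr x v ! k = x ! (nbr v ! k)" unfolding restr_def by simp

lemma dec_in: "dec x v \<in> C0" unfolding dec_def using decode_props[OF C0_fin C0_ne] by auto
lemma dec_min: "w \<in> C0 \<Longrightarrow> hh x v \<le> hdist w (restr nbr x v)"
  unfolding hh_def dec_def using decode_props[OF C0_fin C0_ne] by auto
lemma dec_len: "length (dec x v) = d" using dec_in C0_len by auto

lemma FF_sub: "FF x \<subseteq> {..<n}" unfolding FF_def Fset_def by auto
lemma FF_fin: "finite (FF x)" using FF_sub finite_subset by blast

lemma e_hd:
  assumes v: "v \<in> R" and xl: "length x = n"
  shows "hdist (restr nbr x v) (restr nbr y v) = e x v"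
proof -
  let ?K = "{k. k < length (nbr v) \<and> x ! (nbr v ! k) \<noteq> y ! (nbr v ! k)}"
  have h: "hdist (restr nbr x v) (restr nbr y v) = card ?K"
    unfolding hdist_def restr_len by (intro arg_cong[where f=card]) (auto simp: restr_nth)
  have img: "(\<lambda>k. nbr v ! k) ` ?K = set (nbr v) \<inter> FF x"
  proof
    show "(\<lambda>k. nbr v ! k) ` ?K \<subseteq> set (nbr v) \<inter> FF x"
      using nbr_sub[OF v] nth_mem unfolding FF_def Fset_def by fastforce
  next
    show "set (nbr v) \<inter> FF x \<subseteq> (\<lambda>k. nbr v ! k) ` ?K"
    proof
      fix i assume "i \<in> set (nbr v) \<inter> FF x"
      then obtain k where "k < length (nbr v)" "nbr v ! k = i" "x ! i \<noteq> y ! i"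
        unfolding FF_def Fset_def by (auto simp: in_set_conv_nth)
      then show "i \<in> (\<lambda>k. nbr v ! k) ` ?K" by auto
    qed
  qed
  have "inj_on (\<lambda>k. nbr v ! k) ?K"
    using nbr_dist[OF v] by (auto intro!: inj_on_nth)
  then have "card ?K = card (set (nbr v) \<inter> FF x)"
    using img card_image by fastforce
  then show ?thesis using h unfolding e_def by simp
qed

lemma e_zero_sat:
  assumes v: "v \<in> R" and xl: "length x = n" and e0: "e x v = 0"
  shows "restr nbr x v = restr nbr y v"
  using hdist_zero[of "restr nbr x v" "restr nbr y v"] e_hd[OF v xl] e0 by simp

lemma small_e_dec:
  assumes v: "v \<in> R" and xl: "length x = n" and small: "real (e x v) < t"
  shows "dec x v = restr nbr y v"
proof (rule ccontr)
  assume ne: "dec x v \<noteq> restr nbr y v"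
  have l1: "length (dec x v) = length (restr nbr x v)" using dec_len nbr_len[OF v] by simp
  have l2: "length (restr nbr x v) = length (restr nbr y v)" by simp
  have "hh x v \<le> hdist (restr nbr y v) (restr nbr x v)" using dec_min[OF y_code[OF v]] .
  also have "\<dots> = e x v" using hdist_sym[of "restr nbr y v" "restr nbr x v"] e_hd[OF v xl] by simp
  finally have hle: "hh x v \<le> e x v" .
  have "d0 \<le> hdist (dec x v) (restr nbr y v)" using C0_dist[OF dec_in y_code[OF v] ne] .
  also have "\<dots> \<le> hh x v + hdist (restr nbr x v) (restr nbr y v)"
    unfolding hh_def by (rule hdist_tri[OF l1 l2])
  also have "\<dots> \<le> 2 * e x v" using hle e_hd[OF v xl] by simp
  finally have "real d0 \<le> 2 * real (e x v)" by linarith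
  then show False using small by linarith
qed

lemma wrong_dec:
  assumes v: "v \<in> R" and xl: "length x = n" and ne: "dec x v \<noteq> restr nbr y v"
  shows "d0 \<le> hh x v + e x v"
proof -
  have l1: "length (dec x v) = length (restr nbr x v)" using dec_len nbr_len[OF v] by simp
  have l2: "length (restr nbr x v) = length (restr nbr y v)" by simp
  have "d0 \<le> hdist (dec x v) (restr nbr y v)" using C0_dist[OF dec_in y_code[OF v] ne] .
  also have "\<dots> \<le> hh x v + hdist (restr nbr x v) (restr nbr y v)"
    unfolding hh_def by (rule hdist_tri[OF l1 l2])
  finally show ?thesis using e_hd[OF v xl] by simp
qed

lemma tgt_props:
  assumes v: "v \<in> R" and xl: "length x = n" and a: "act x v"
  shows "tgt x v \<in> set (nbr v)" and "dec x v = restr nbr y v \<Longrightarrow> tgt x v \<in> FF x"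
proof -
  let ?D = "{nbr v ! k | k. k < length (nbr v) \<and> dec x v ! k \<noteq> x ! (nbr v ! k)}"
  have "hh x v \<noteq> 0" using a unfolding act_def by auto
  then have "{i. i < length (dec x v) \<and> dec x v ! i \<noteq> restr nbr x v ! i} \<noteq> {}"
    unfolding hh_def hdist_def by (metis card.empty)
  then obtain k where k: "k < length (dec x v)" "dec x v ! k \<noteq> restr nbr x v ! k" by auto
  have kl: "k < length (nbr v)" using k(1) dec_len nbr_len[OF v] by simp
  then have "nbr v ! k \<in> ?D" using k(2) restr_nth by auto
  then have Dne: "?D \<noteq> {}" by auto
  have Dfin: "finite ?D"
  proof -
    have "?D \<subseteq> set (nbr v)" by auto
    then show ?thesis using finite_subset by blast
  qed
  have tin: "tgt x v \<in> ?D" unfolding tgt_def using Min_in[OF Dfin Dne] .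
  then show "tgt x v \<in> set (nbr v)" by auto
  assume eq: "dec x v = restr nbr y v"
  from tin obtain j where j: "j < length (nbr v)" "tgt x v = nbr v ! j" "dec x v ! j \<noteq> x ! (nbr v ! j)" by auto
  then have "y ! (nbr v ! j) \<noteq> x ! (nbr v ! j)" using eq restr_nth by metis
  moreover have "nbr v ! j < n" using nbr_sub[OF v] j(1) nth_mem by blast
  ultimately show "tgt x v \<in> FF x" using j(2) unfolding FF_def Fset_def by auto
qed

lemma tgt_lt: "v \<in> R \<Longrightarrow> length x = n \<Longrightarrow> act x v \<Longrightarrow> tgt x v < n"
  using tgt_props(1) nbr_sub by blast

lemma wrong_tgt_e:
  assumes v: "v \<in> R" and xl: "length x = n" and a: "act x v" and nf: "tgt x v \<notin> FF x"
  shows "real (e x v) > t"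
proof -
  have "dec x v \<noteq> restr nbr y v" using tgt_props(2)[OF v xl a] nf by auto
  then have "d0 \<le> hh x v + e x v" using wrong_dec[OF v xl] by auto
  then show ?thesis using a unfolding act_def by linarith
qed

lemma act_U: "v \<in> R \<Longrightarrow> act x v \<Longrightarrow> v \<in> Uset R nbr C0 x"
proof -
  assume v: "v \<in> R" and a: "act x v"
  show ?thesis
  proof (rule ccontr)
    assume "v \<notin> Uset R nbr C0 x"
    then have "restr nbr x v \<in> C0" using v unfolding Uset_def by auto
    then have "hh x v \<le> 0" using dec_min[of "restr nbr x v"] hdist_self by metis
    then show False using a unfolding act_def by auto
  qed
qed

end

context tsetup begin

lemma sum_e: "(\<Sum>v\<in>R. e x v) = c * card (FF x)"
proof -
  have "(\<Sum>v\<in>R. e x v) = (\<Sum>v\<in>R. \<Sum>i\<in>FF x. if i \<in> set (nbr v) then 1 else 0)"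
  proof (rule sum.cong[OF refl])
    fix v
    have "e x v = card {i \<in> FF x. i \<in> set (nbr v)}" unfolding e_def
      by (intro arg_cong[where f=card]) auto
    also have "\<dots> = (\<Sum>i\<in>{i \<in> FF x. i \<in> set (nbr v)}. 1)" by simp
    also have "\<dots> = (\<Sum>i\<in>FF x. if i \<in> set (nbr v) then 1 else 0)"
      by (rule sum.inter_filter[OF FF_fin])
    finally show "e x v = (\<Sum>i\<in>FF x. if i \<in> set (nbr v) then 1 else 0)" .
  qed
  also have "\<dots> = (\<Sum>i\<in>FF x. \<Sum>v\<in>R. if i \<in> set (nbr v) then 1 else 0)"
    by (rule sum.swap)
  also have "\<dots> = (\<Sum>i\<in>FF x. c)"
  proof (rule sum.cong[OF refl])
    fix i assume "i \<in> FF x"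
    then have "i < n" using FF_sub by auto
    have "(\<Sum>v\<in>R. if i \<in> set (nbr v) then 1 else 0) = (\<Sum>v\<in>{v\<in>R. i \<in> set (nbr v)}. (1::nat))"
      by (rule sum.inter_filter[OF Rfin, symmetric])
    also have "\<dots> = c" using deg[OF \<open>i < n\<close>] by simp
    finally show "(\<Sum>v\<in>R. if i \<in> set (nbr v) then 1 else 0) = c" .
  qed
  also have "\<dots> = c * card (FF x)" by simp
  finally show ?thesis .
qed

lemma NB_eq: "NB x = {v\<in>R. e x v \<noteq> 0}"
  unfolding NB_def Nb_def e_def by auto

lemma NB_fin: "finite (NB x)" unfolding NB_eq using Rfin by auto

lemma sum_e_NB: "(\<Sum>v\<in>NB x. e x v) = c * card (FF x)"
proof -
  have "(\<Sum>v\<in>NB x. e x v) = (\<Sum>v\<in>R. e x v)"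
    by (rule sum.mono_neutral_left[OF Rfin]) (auto simp: NB_eq)
  then show ?thesis using sum_e by simp
qed

lemma card_NB: "card (NB x) \<le> c * card (FF x)"
proof -
  have "card (NB x) = (\<Sum>v\<in>NB x. 1)" by simp
  also have "\<dots> \<le> (\<Sum>v\<in>NB x. e x v)" by (rule sum_mono) (auto simp: NB_eq)
  finally show ?thesis using sum_e_NB by simp
qed

lemma U_sub: "length x = n \<Longrightarrow> Uset R nbr C0 x \<subseteq> NB x"
proof
  fix v assume xl: "length x = n" and v: "v \<in> Uset R nbr C0 x"
  then have vR: "v \<in> R" and nc: "restr nbr x v \<notin> C0" unfolding Uset_def by auto
  show "v \<in> NB x"
  proof (rule ccontr)
    assume "v \<notin> NB x"
    then have "e x v = 0" using vR unfolding NB_eq by auto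
    then have "restr nbr x v = restr nbr y v" using e_zero_sat[OF vR xl] by simp
    then show False using nc y_code[OF vR] by simp
  qed
qed

lemma U_fin: "finite (Uset R nbr C0 x)" unfolding Uset_def using Rfin by auto

lemma U_le_R: "card (Uset R nbr C0 x) \<le> card R"
  by (rule card_mono[OF Rfin]) (auto simp: Uset_def)

lemma U_upper: "length x = n \<Longrightarrow> card (Uset R nbr C0 x) \<le> c * card (FF x)"
  using card_mono[OF NB_fin U_sub] card_NB le_trans by blast

lemma NB_lower: "real (card (FF x)) \<le> \<alpha> * real n \<Longrightarrow> \<delta> * real c * real (card (FF x)) \<le> real (card (NB x))"
  unfolding NB_def using expand[OF FF_sub] by auto

lemma U_lower:
  assumes xl: "length x = n" and small: "real (card (FF x)) \<le> \<alpha> * real n"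
  shows "real c * real (card (FF x)) * (\<delta> * real d0 - 1) \<le> (real d0 - 1) * real (card (Uset R nbr C0 x))"
proof -
  define A where "A = {v \<in> NB x. d0 \<le> e x v}"
  define B where "B = {v \<in> NB x. \<not> d0 \<le> e x v}"
  have fA: "finite A" and fB: "finite B" unfolding A_def B_def using NB_fin by auto
  have AB: "NB x = A \<union> B" "A \<inter> B = {}" unfolding A_def B_def by auto
  have BU: "B \<subseteq> Uset R nbr C0 x"
  proof
    fix v assume vB: "v \<in> B"
    then have vR: "v \<in> R" and e1: "e x v \<noteq> 0" and ed: "e x v < d0"
      unfolding B_def NB_eq by auto
    show "v \<in> Uset R nbr C0 x"
    proof (rule ccontr)
      assume "v \<notin> Uset R nbr C0 x"
      then have inC: "restr nbr x v \<in> C0" using vR unfolding Uset_def by auto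
      have "restr nbr x v \<noteq> restr nbr y v" using e1 e_hd[OF vR xl] hdist_self by metis
      then have "d0 \<le> hdist (restr nbr x v) (restr nbr y v)"
        using C0_dist[OF inC y_code[OF vR]] by simp
      then show False using ed e_hd[OF vR xl] by simp
    qed
  qed
  have cB: "card B \<le> card (Uset R nbr C0 x)" using card_mono[OF U_fin BU] .
  have "(\<Sum>v\<in>NB x. e x v) = (\<Sum>v\<in>A. e x v) + (\<Sum>v\<in>B. e x v)"
    using AB fA fB sum.union_disjoint by metis
  moreover have "(\<Sum>v\<in>A. e x v) \<ge> (\<Sum>v\<in>A. d0)" by (rule sum_mono) (auto simp: A_def)
  moreover have "(\<Sum>v\<in>B. e x v) \<ge> (\<Sum>v\<in>B. 1)" by (rule sum_mono) (auto simp: B_def NB_eq)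
  ultimately have s1: "d0 * card A + card B \<le> c * card (FF x)"
    using sum_e_NB[of x] by (simp add: mult.commute)
  have s2: "card (NB x) = card A + card B" using AB fA fB card_Un_disjoint by metis
  have r1: "real d0 * real (card A) + real (card B) \<le> real c * real (card (FF x))"
    using s1 by (metis of_nat_add of_nat_le_iff of_nat_mult)
  have r2: "\<delta> * real c * real (card (FF x)) \<le> real (card A) + real (card B)"
    using NB_lower[OF small] s2 by simp
  have "real d0 * (\<delta> * real c * real (card (FF x))) \<le> real d0 * (real (card A) + real (card B))"
    using r2 by (intro mult_left_mono) auto
  then have "real c * real (card (FF x)) * (\<delta> * real d0 - 1) \<le> (real d0 - 1) * real (card B)"
    using r1 by (simp add: algebra_simps)
  also have "\<dots> \<le> (real d0 - 1) * real (card (Uset R nbr C0 x))"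
    using cB d0_gt2 by (intro mult_left_mono) auto
  finally show ?thesis .
qed

end

context tsetup begin

abbreviation "p x i \<equiv> pval R nbr C0 c t x i"
abbreviation "W \<equiv> Wset c d0"
abbreviation "df x q \<equiv> deterflip n R nbr C0 c t x q"

lemma pval_eq: "p x i = (\<Sum>v\<in>{v\<in>R. act x v \<and> i = tgt x v}. wt x v)"
  unfolding pval_def act_def tgt_def wt_def hh_def dec_def Let_def by simp

lemma wt_pos: "act x v \<Longrightarrow> wt x v > 0"
  unfolding wt_def act_def using cpos d0_gt2 by (auto intro!: divide_pos_pos)

lemma p_nonneg: "p x i \<ge> 0"
  unfolding pval_eq by (rule sum_nonneg) (auto dest: wt_pos[THEN less_imp_le])

lemma W_fin: "finite W"
proof -
  have "W = (\<lambda>i. real i / (real c * real d0)) ` {..c * d0}" unfolding Wset_def by auto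
  then show ?thesis by simp
qed

lemma W_card: "card (W - {0}) \<le> c * d0"
proof -
  have "W - {0} \<subseteq> (\<lambda>i. real i / (real c * real d0)) ` {1..c * d0}"
  proof
    fix q assume "q \<in> W - {0}"
    then obtain i where "q = real i / (real c * real d0)" "i \<le> c * d0" "q \<noteq> 0" unfolding Wset_def by auto
    then have "i \<ge> 1" by (cases i) auto
    then show "q \<in> (\<lambda>i. real i / (real c * real d0)) ` {1..c * d0}"
      using \<open>q = real i / (real c * real d0)\<close> \<open>i \<le> c * d0\<close> by auto
  qed
  then have "card (W - {0}) \<le> card ((\<lambda>i. real i / (real c * real d0)) ` {1..c * d0})"
    by (intro card_mono) auto
  also have "\<dots> \<le> card {1..c * d0}" by (rule card_image_le) simp
  finally show ?thesis by simp
qed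

lemma W_bounds: "q \<in> W \<Longrightarrow> 0 \<le> q \<and> q \<le> 1"
proof -
  assume "q \<in> W"
  then obtain i where i: "q = real i / (real c * real d0)" "i \<le> c * d0" unfolding Wset_def by auto
  have pos: "real c * real d0 > 0" using cpos d0_gt2 by auto
  have "real i \<le> real c * real d0" using i(2) by (metis of_nat_le_iff of_nat_mult)
  then show ?thesis using i pos by auto
qed

lemma one_in_W: "1 \<in> W - {0}"
proof -
  have pos: "real c * real d0 > 0" using cpos d0_gt2 by auto
  have "1 = real (c * d0) / (real c * real d0)" using pos by (simp del: of_nat_mult add: of_nat_mult[symmetric])
  then have "1 \<in> W" unfolding Wset_def by (intro CollectI exI[of _ "c * d0"]) auto
  then show ?thesis by simp
qed

lemma p_in_W:
  assumes xl: "length x = n"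
  shows "p x i \<in> W"
proof -
  define S where "S = {v\<in>R. act x v \<and> i = tgt x v}"
  have Sfin: "finite S" unfolding S_def using Rfin by auto
  have pos: "real c * real d0 > 0" using cpos d0_gt2 by auto
  have wtS: "wt x v = real (d0 - 2 * hh x v) / (real c * real d0)" if "v \<in> S" for v
  proof -
    have "real (hh x v) < t" using that unfolding S_def act_def by auto
    then have "2 * hh x v \<le> d0" by linarith
    then have "real (d0 - 2 * hh x v) = real d0 - 2 * real (hh x v)" by (simp add: of_nat_diff)
    moreover have "real c \<noteq> 0" "real d0 \<noteq> 0" using cpos d0_gt2 by auto
    ultimately show ?thesis unfolding wt_def by (simp add: field_simps)
  qed
  define k where "k = (\<Sum>v\<in>S. d0 - 2 * hh x v)"
  have peq: "p x i = real k / (real c * real d0)"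
    unfolding pval_eq S_def[symmetric] k_def using wtS
    by (simp add: sum_divide_distrib[symmetric])
  have "k \<le> c * d0"
  proof (cases "S = {}")
    case True then show ?thesis unfolding k_def by simp
  next
    case False
    then obtain v where v: "v \<in> S" by auto
    then have "i < n" unfolding S_def using tgt_lt[OF _ xl] by auto
    have "S \<subseteq> {v\<in>R. i \<in> set (nbr v)}" unfolding S_def using tgt_props(1)[OF _ xl] by auto
    then have cS: "card S \<le> c" using card_mono[of "{v\<in>R. i \<in> set (nbr v)}" S] Rfin deg[OF \<open>i < n\<close>] by auto
    have "k \<le> (\<Sum>v\<in>S. d0)" unfolding k_def by (rule sum_mono) auto
    also have "\<dots> = card S * d0" by simp
    also have "\<dots> \<le> c * d0" using cS by simp
    finally show ?thesis .
  qed
  then show ?thesis unfolding Wset_def peq by blast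
qed

lemma df_len: "length (df x q) = n" unfolding deterflip_def by simp

lemma df_nth: "i < n \<Longrightarrow> df x q ! i = (if p x i = q then \<not> x ! i else x ! i)"
  unfolding deterflip_def by simp

definition "gg x q = card {i\<in>FF x. p x i = q}"
definition "bb x q = card {i\<in>{..<n} - FF x. p x i = q}"

lemma FF_df: "length x = n \<Longrightarrow> FF (df x q) = {i\<in>FF x. p x i \<noteq> q} \<union> {i\<in>{..<n} - FF x. p x i = q}"
  unfolding FF_def Fset_def using df_nth by auto

lemma card_df:
  assumes xl: "length x = n"
  shows "real (card (FF (df x q))) = real (card (FF x)) - real (gg x q) + real (bb x q)"
proof -
  have fin1: "finite {i\<in>FF x. p x i \<noteq> q}" using FF_fin by auto
  have fin2: "finite {i\<in>{..<n} - FF x. p x i = q}" by auto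
  have "card (FF (df x q)) = card {i\<in>FF x. p x i \<noteq> q} + card {i\<in>{..<n} - FF x. p x i = q}"
    unfolding FF_df[OF xl] by (rule card_Un_disjoint[OF fin1 fin2]) auto
  moreover have "card (FF x) = card {i\<in>FF x. p x i \<noteq> q} + gg x q"
  proof -
    have "FF x = {i\<in>FF x. p x i \<noteq> q} \<union> {i\<in>FF x. p x i = q}" by auto
    then have "card (FF x) = card ({i\<in>FF x. p x i \<noteq> q} \<union> {i\<in>FF x. p x i = q})" by simp
    also have "\<dots> = card {i\<in>FF x. p x i \<noteq> q} + card {i\<in>FF x. p x i = q}"
      by (rule card_Un_disjoint) (use FF_fin in auto)
    finally show ?thesis unfolding gg_def .
  qed
  ultimately show ?thesis unfolding bb_def by simp
qed

lemma growth_b: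
  assumes xl: "length x = n" and q0: "q \<noteq> 0"
  shows "t * real (bb x q) \<le> real c * real (card (FF x))"
proof -
  define Z where "Z = {v\<in>R. t < real (e x v)}"
  have Zfin: "finite Z" unfolding Z_def using Rfin by auto
  have sub: "{i\<in>{..<n} - FF x. p x i = q} \<subseteq> tgt x ` Z"
  proof
    fix i assume i: "i \<in> {i\<in>{..<n} - FF x. p x i = q}"
    then have "p x i \<noteq> 0" using q0 by auto
    then have "{v\<in>R. act x v \<and> i = tgt x v} \<noteq> {}" unfolding pval_eq by (metis sum.empty)
    then obtain v where v: "v \<in> R" "act x v" "i = tgt x v" by auto
    then have "tgt x v \<notin> FF x" using i by auto
    then have "v \<in> Z" unfolding Z_def using wrong_tgt_e[OF v(1) xl v(2)] v(1) by auto
    then show "i \<in> tgt x ` Z" using v(3) by auto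
  qed
  have "bb x q \<le> card (tgt x ` Z)" unfolding bb_def using card_mono[OF _ sub] Zfin by auto
  also have "\<dots> \<le> card Z" by (rule card_image_le[OF Zfin])
  finally have bZ: "real (bb x q) \<le> real (card Z)" by simp
  have "t * real (card Z) = (\<Sum>v\<in>Z. t)" by simp
  also have "\<dots> \<le> (\<Sum>v\<in>Z. real (e x v))" by (rule sum_mono) (auto simp: Z_def)
  also have "\<dots> \<le> (\<Sum>v\<in>R. real (e x v))" by (rule sum_mono2[OF Rfin]) (auto simp: Z_def)
  also have "\<dots> = real c * real (card (FF x))" using sum_e[of x] by (metis of_nat_mult of_nat_sum)
  finally show ?thesis using bZ d0_gt2
    by (meson less_eq_real_def mult_left_mono order_trans zero_le_divide_iff zero_le_numeral of_nat_0_le_iff)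
qed

lemma growth:
  assumes xl: "length x = n" and q0: "q \<noteq> 0"
  shows "real (card (FF (df x q))) \<le> (1 + real c / t) * real (card (FF x))"
proof -
  have tpos: "t > 0" using d0_gt2 by auto
  have "real (bb x q) \<le> real c * real (card (FF x)) / t"
    using growth_b[OF xl q0] tpos by (simp add: field_simps)
  moreover have "real (card (FF (df x q))) \<le> real (card (FF x)) + real (bb x q)"
    using card_df[OF xl, of q] by simp
  ultimately have "real (card (FF (df x q))) \<le> real (card (FF x)) + real c * real (card (FF x)) / t"
    by linarith
  then show ?thesis by (simp add: algebra_simps)
qed

end

context tsetup begin

definition "sg x i = (if i \<in> FF x then (1::real) else -1)"
definition "tm x v = (if act x v then sg x (tgt x v) * wt x v else 0)"

lemma sum_identity:
  assumes xl: "length x = n"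
  shows "(\<Sum>i<n. sg x i * p x i) = (\<Sum>v\<in>R. tm x v)"
proof -
  have "(\<Sum>i<n. sg x i * p x i) = (\<Sum>i<n. \<Sum>v\<in>R. if act x v \<and> i = tgt x v then sg x i * wt x v else 0)"
  proof (rule sum.cong[OF refl])
    fix i
    have "sg x i * p x i = (\<Sum>v\<in>{v\<in>R. act x v \<and> i = tgt x v}. sg x i * wt x v)"
      unfolding pval_eq by (simp add: sum_distrib_left)
    also have "\<dots> = (\<Sum>v\<in>R. if act x v \<and> i = tgt x v then sg x i * wt x v else 0)"
      by (rule sum.inter_filter[OF Rfin])
    finally show "sg x i * p x i = (\<Sum>v\<in>R. if act x v \<and> i = tgt x v then sg x i * wt x v else 0)" .
  qed
  also have "\<dots> = (\<Sum>v\<in>R. \<Sum>i<n. if act x v \<and> i = tgt x v then sg x i * wt x v else 0)"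
    by (rule sum.swap)
  also have "\<dots> = (\<Sum>v\<in>R. tm x v)"
  proof (rule sum.cong[OF refl])
    fix v assume v: "v \<in> R"
    show "(\<Sum>i<n. if act x v \<and> i = tgt x v then sg x i * wt x v else 0) = tm x v"
    proof (cases "act x v")
      case True
      then have "tgt x v < n" using tgt_lt[OF v xl] by auto
      then show ?thesis using True unfolding tm_def by (simp add: sum.delta)
    next
      case False
      then show ?thesis unfolding tm_def by simp
    qed
  qed
  finally show ?thesis .
qed

lemma term_lower:
  assumes v: "v \<in> R" and xl: "length x = n"
  shows "tm x v \<ge> (if e x v \<noteq> 0 then (t - real (e x v)) / (real c * t) else 0)"
proof -
  have ct: "real c * t > 0" using cpos d0_gt2 by auto
  show ?thesis
  proof (cases "e x v = 0")
    case True
    then have "restr nbr x v = restr nbr y v" using e_zero_sat[OF v xl] by simp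
    then have "restr nbr x v \<in> C0" using y_code[OF v] by simp
    then have "hh x v \<le> 0" using dec_min[of "restr nbr x v"] hdist_self by metis
    then have "\<not> act x v" unfolding act_def by auto
    then show ?thesis using True unfolding tm_def by simp
  next
    case e0: False
    show ?thesis
    proof (cases "real (e x v) < t")
      case True
      have dc: "dec x v = restr nbr y v" using small_e_dec[OF v xl True] .
      have "hh x v = e x v" unfolding hh_def dc
        using hdist_sym[of "restr nbr y v" "restr nbr x v"] e_hd[OF v xl] by simp
      then have a: "act x v" unfolding act_def using e0 True by auto
      have "tgt x v \<in> FF x" using tgt_props(2)[OF v xl a dc] .
      then have "tm x v = wt x v" unfolding tm_def sg_def using a by simp
      then show ?thesis using e0 \<open>hh x v = e x v\<close> unfolding wt_def by simp
    next
      case False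
      then have rhs: "(t - real (e x v)) / (real c * t) \<le> 0" using ct
        by (simp add: divide_nonpos_pos)
      show ?thesis
      proof (cases "act x v")
        case a: True
        show ?thesis
        proof (cases "tgt x v \<in> FF x")
          case True
          then have "tm x v = wt x v" unfolding tm_def sg_def using a by simp
          then show ?thesis using wt_pos[OF a] rhs e0 by simp
        next
          case nf: False
          have "dec x v \<noteq> restr nbr y v" using tgt_props(2)[OF v xl a] nf by auto
          then have hd: "real d0 \<le> real (hh x v) + real (e x v)" using wrong_dec[OF v xl] by linarith
          have "tm x v = - wt x v" unfolding tm_def sg_def using a nf by simp
          also have "\<dots> = (real (hh x v) - t) / (real c * t)" unfolding wt_def minus_divide_left by simp
          also have "\<dots> \<ge> (t - real (e x v)) / (real c * t)"
            using hd ct by (intro divide_right_mono) auto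
          finally show ?thesis using e0 by simp
        qed
      next
        case False
        then show ?thesis using rhs e0 unfolding tm_def by simp
      qed
    qed
  qed
qed

lemma sum_term_lower:
  assumes xl: "length x = n"
  shows "(\<Sum>v\<in>R. tm x v) \<ge> (t * real (card (NB x)) - real c * real (card (FF x))) / (real c * t)"
proof -
  have "(\<Sum>v\<in>R. tm x v) \<ge> (\<Sum>v\<in>R. if e x v \<noteq> 0 then (t - real (e x v)) / (real c * t) else 0)"
    by (rule sum_mono) (use term_lower[OF _ xl] in auto)
  moreover have "(\<Sum>v\<in>R. if e x v \<noteq> 0 then (t - real (e x v)) / (real c * t) else 0)
      = (\<Sum>v\<in>NB x. (t - real (e x v)) / (real c * t))"
    unfolding NB_eq by (rule sum.inter_filter[OF Rfin, symmetric])
  moreover have "(\<Sum>v\<in>NB x. (t - real (e x v)) / (real c * t))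
      = (t * real (card (NB x)) - (\<Sum>v\<in>NB x. real (e x v))) / (real c * t)"
    by (simp add: sum_divide_distrib[symmetric] sum_subtractf sum_distrib_right)
  moreover have "(\<Sum>v\<in>NB x. real (e x v)) = real c * real (card (FF x))"
    using sum_e_NB[of x] by (metis of_nat_mult of_nat_sum)
  ultimately show ?thesis by simp
qed

lemma grouping:
  assumes xl: "length x = n"
  shows "(\<Sum>i<n. sg x i * p x i) = (\<Sum>q\<in>W - {0}. q * (real (gg x q) - real (bb x q)))"
proof -
  have "(\<Sum>i<n. sg x i * p x i) = (\<Sum>q\<in>W. \<Sum>i\<in>{i\<in>{..<n}. p x i = q}. sg x i * p x i)"
    by (rule sum.group[symmetric]) (use W_fin p_in_W[OF xl] in auto)
  also have "\<dots> = (\<Sum>q\<in>W. q * (real (gg x q) - real (bb x q)))"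
  proof (rule sum.cong[OF refl])
    fix q
    have "(\<Sum>i\<in>{i\<in>{..<n}. p x i = q}. sg x i * p x i) = (\<Sum>i\<in>{i\<in>{..<n}. p x i = q}. sg x i * q)"
      by (rule sum.cong) auto
    also have "\<dots> = q * (\<Sum>i\<in>{i\<in>{..<n}. p x i = q}. sg x i)"
      by (simp add: sum_distrib_left mult.commute)
    also have "(\<Sum>i\<in>{i\<in>{..<n}. p x i = q}. sg x i) = real (gg x q) - real (bb x q)"
    proof -
      have split: "{i\<in>{..<n}. p x i = q} = {i\<in>FF x. p x i = q} \<union> {i\<in>{..<n} - FF x. p x i = q}"
        using FF_sub by auto
      have "(\<Sum>i\<in>{i\<in>{..<n}. p x i = q}. sg x i)
          = (\<Sum>i\<in>{i\<in>FF x. p x i = q}. sg x i) + (\<Sum>i\<in>{i\<in>{..<n} - FF x. p x i = q}. sg x i)"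
        unfolding split by (rule sum.union_disjoint) (use FF_fin in auto)
      also have "(\<Sum>i\<in>{i\<in>FF x. p x i = q}. sg x i) = real (gg x q)"
        unfolding gg_def sg_def by simp
      also have "(\<Sum>i\<in>{i\<in>{..<n} - FF x. p x i = q}. sg x i) = - real (bb x q)"
        unfolding bb_def sg_def by simp
      finally show ?thesis by simp
    qed
    finally show "(\<Sum>i\<in>{i\<in>{..<n}. p x i = q}. sg x i * p x i) = q * (real (gg x q) - real (bb x q))" .
  qed
  also have "\<dots> = (\<Sum>q\<in>W - {0}. q * (real (gg x q) - real (bb x q)))"
    using sum_diff1[OF W_fin, of "\<lambda>q. q * (real (gg x q) - real (bb x q))" 0] by auto
  finally show ?thesis .
qed

definition "epsp = (t * \<delta> - 1) / (t * real c * real d0)"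

lemma progress:
  assumes xl: "length x = n" and small: "real (card (FF x)) \<le> \<alpha> * real n"
  shows "\<exists>q\<in>W - {0}. real (card (FF (df x q))) \<le> (1 - epsp) * real (card (FF x))"
proof -
  define f where "f = real (card (FF x))"
  define D where "D q = real (gg x q) - real (bb x q)" for q
  have ct: "real c * t > 0" using cpos d0_gt2 by auto
  have "t * \<delta> = (\<delta> * real d0) / 2" by simp
  then have td: "t * \<delta> > 1" using dd by linarith
  have X: "(\<Sum>q\<in>W - {0}. q * D q) \<ge> f * (t * \<delta> - 1) / t"
  proof -
    have "(\<Sum>q\<in>W - {0}. q * D q) \<ge> (t * real (card (NB x)) - real c * f) / (real c * t)"
      using sum_term_lower[OF xl] sum_identity[OF xl] grouping[OF xl] unfolding D_def f_def by simp
    moreover have "t * (\<delta> * real c * f) \<le> t * real (card (NB x))"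
      using NB_lower[OF small] d0_gt2 unfolding f_def by (intro mult_left_mono) auto
    then have "(t * (\<delta> * real c * f) - real c * f) / (real c * t) \<le> (t * real (card (NB x)) - real c * f) / (real c * t)"
      using ct by (intro divide_right_mono) auto
    moreover have "(t * (\<delta> * real c * f) - real c * f) / (real c * t) = f * (t * \<delta> - 1) / t"
      using cpos d0_gt2 by (simp add: field_simps)
    ultimately show ?thesis by linarith
  qed
  have fnn: "f \<ge> 0" unfolding f_def by simp
  have X0: "f * (t * \<delta> - 1) / t \<ge> 0" using fnn td d0_gt2 by auto
  define M where "M = Max (D ` (W - {0}))"
  have Wne: "W - {0} \<noteq> {}" using one_in_W by auto
  have Wf: "finite (W - {0})" using W_fin by auto
  have "M \<in> D ` (W - {0})" unfolding M_def using Wne Wf by auto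
  then obtain q0 where q0: "q0 \<in> W - {0}" "D q0 = M" by auto
  have Mge: "\<forall>q\<in>W - {0}. D q \<le> M" unfolding M_def using Wf by auto
  have qpos: "\<forall>q\<in>W - {0}. 0 < q \<and> q \<le> 1" using W_bounds by force
  have M0: "M \<ge> 0"
  proof (rule ccontr)
    assume "\<not> M \<ge> 0"
    have "\<forall>q\<in>W - {0}. 0 < - (q * D q)"
    proof
      fix q assume q: "q \<in> W - {0}"
      then have "D q < 0" using Mge \<open>\<not> M \<ge> 0\<close> by force
      moreover have "q > 0" using qpos q by auto
      ultimately have "q * D q < 0" by (simp add: mult_pos_neg)
      then show "0 < - (q * D q)" by simp
    qed
    then have "0 < (\<Sum>q\<in>W - {0}. - (q * D q))" by (intro sum_pos[OF Wf Wne]) auto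
    then show False using X X0 by (simp add: sum_negf)
  qed
  have "\<forall>q\<in>W - {0}. q * D q \<le> M"
  proof
    fix q assume q: "q \<in> W - {0}"
    show "q * D q \<le> M"
    proof (cases "D q \<ge> 0")
      case True
      then have "q * D q \<le> 1 * D q" using qpos q by (intro mult_right_mono) auto
      moreover have "D q \<le> M" using Mge q by blast
      ultimately show ?thesis by simp
    next
      case False
      moreover have "q \<ge> 0" using W_bounds[of q] q by blast
      ultimately have "q * D q \<le> 0" by (intro mult_nonneg_nonpos) auto
      then show ?thesis using M0 by auto
    qed
  qed
  then have "(\<Sum>q\<in>W - {0}. q * D q) \<le> real (card (W - {0})) * M"
    by (intro sum_bounded_above) auto
  also have "\<dots> \<le> real (c * d0) * M" using W_card M0 by (intro mult_right_mono) (simp only: of_nat_le_iff, simp)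
  finally have "f * (t * \<delta> - 1) / t \<le> real c * real d0 * M" using X by simp
  then have "epsp * f \<le> M" unfolding epsp_def using cpos d0_gt2
    by (simp add: field_simps)
  then have "real (card (FF (df x q0))) \<le> (1 - epsp) * f"
    using card_df[OF xl, of q0] q0 unfolding D_def f_def by (simp add: algebra_simps)
  then show ?thesis using q0 unfolding f_def by blast
qed

end

context tsetup begin

abbreviation "\<gamma> \<equiv> inverse (1 + real c / (real d0 / 2)) * ((\<delta> * real d0 - 1) / (real d0 - 1)) * \<alpha>"
abbreviation "rs x qs \<equiv> run_seq n R nbr C0 c t \<gamma> x qs"
abbreviation "UU x \<equiv> card (Uset R nbr C0 x)"
definition "rr = (\<delta> * real d0 - 1) / (real d0 - 1)"
definition "BB = \<alpha> * real n * (t / (t + real c))"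

lemma alpha_pos: "\<alpha> > 0" using apos .
  
lemma rr_pos: "rr > 0" and rr_le1: "rr \<le> 1"
proof -
  have "\<delta> * real d0 \<le> 1 * real d0" by (rule mult_right_mono) (use dle in auto)
  then show "rr > 0" "rr \<le> 1" unfolding rr_def using dd d0_gt2 by auto
qed

lemma gamma_eq: "\<gamma> = \<alpha> * (t / (t + real c)) * rr"
proof -
  have "inverse (1 + real c / t) = t / (t + real c)" using d0_gt2 by (simp add: field_simps)
  then show ?thesis unfolding rr_def by simp
qed

lemma gamma_nonneg: "\<gamma> \<ge> 0" unfolding gamma_eq using alpha_pos rr_pos d0_gt2 by auto

lemma gn_le_BB: "\<gamma> * real n \<le> BB"
proof -
  have "\<gamma> * real n = BB * rr" unfolding gamma_eq BB_def by simp
  also have "\<dots> \<le> BB * 1" using rr_le1 alpha_pos d0_gt2 unfolding BB_def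
    by (intro mult_left_mono) auto
  finally show ?thesis by simp
qed

lemma BB_le: "BB \<le> \<alpha> * real n"
proof -
  have "t / (t + real c) \<le> 1" using d0_gt2 by auto
  then have "\<alpha> * real n * (t / (t + real c)) \<le> \<alpha> * real n * 1"
    using alpha_pos by (intro mult_left_mono) auto
  then show ?thesis unfolding BB_def by simp
qed

lemma growth_BB: "(1 + real c / t) * BB = \<alpha> * real n"
proof -
  have gen: "T > 0 \<Longrightarrow> C \<ge> 0 \<Longrightarrow> (1 + C / T) * (T / (T + C)) = (1::real)" for T C
  proof -
    assume "T > 0" "C \<ge> 0"
    then have h: "T + C \<noteq> 0" "T \<noteq> 0" by auto
    then have "1 + C / T = (T + C) / T" by (simp add: field_simps)
    then show ?thesis using h by simp
  qed
  have e: "(1 + real c / t) * (t / (t + real c)) = 1" using d0_gt2 by (intro gen) auto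
  have "(1 + real c / t) * BB = \<alpha> * real n * ((1 + real c / t) * (t / (t + real c)))"
    unfolding BB_def by (rule mult.left_commute)
  then show ?thesis by (simp only: e mult_1_right)
qed

lemma step_back:
  assumes xl: "length x' = n" and fa: "real (card (FF x')) \<le> \<alpha> * real n"
    and u: "real (UU x') \<le> real c * \<gamma> * real n"
  shows "real (card (FF x')) \<le> BB"
proof -
  have "real c * real (card (FF x')) * (\<delta> * real d0 - 1) \<le> (real d0 - 1) * real (UU x')"
    using U_lower[OF xl fa] .
  also have "\<dots> \<le> (real d0 - 1) * (real c * \<gamma> * real n)" using u d0_gt2 by (intro mult_left_mono) auto
  finally have h: "real c * real (card (FF x')) * (\<delta> * real d0 - 1) \<le> (real d0 - 1) * (real c * \<gamma> * real n)" .
  have d1: "real d0 - 1 > 0" using d0_gt2 by auto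
  have c0: "real c > 0" using cpos by auto
  have "real (card (FF x')) * rr \<le> \<gamma> * real n"
  proof -
    have "real c * (real (card (FF x')) * (\<delta> * real d0 - 1)) \<le> real c * ((real d0 - 1) * (\<gamma> * real n))"
      using h by (simp add: algebra_simps)
    then have "real (card (FF x')) * (\<delta> * real d0 - 1) \<le> (real d0 - 1) * (\<gamma> * real n)"
      using c0 by (simp add: mult_le_cancel_left_pos)
    then show ?thesis unfolding rr_def using d1 by (simp add: field_simps)
  qed
  also have "\<gamma> * real n = BB * rr" unfolding gamma_eq BB_def by simp
  finally show ?thesis using rr_pos by simp
qed

lemma RL1:
  "\<forall>q\<in>set qs. q \<in> W - {0} \<Longrightarrow> length x = n \<Longrightarrow> real (card (FF x)) \<le> BB
   \<Longrightarrow> fst (rs x qs) = Some r \<Longrightarrow> length r = n \<and> real (card (FF r)) \<le> BB"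
proof (induction qs arbitrary: x)
  case Nil
  then show ?case by simp
next
  case (Cons q qs)
  let ?x' = "df x q"
  have q0: "q \<noteq> 0" using Cons.prems(1) by auto
  have ok: "\<not> real (UU ?x') > real c * \<gamma> * real n" and rest: "fst (rs ?x' qs) = Some r"
    using Cons.prems(4) by (auto simp: Let_def split: prod.splits if_splits)
  have l': "length ?x' = n" by (rule df_len)
  have "real (card (FF ?x')) \<le> (1 + real c / t) * real (card (FF x))" using growth[OF Cons.prems(2) q0] .
  also have "\<dots> \<le> (1 + real c / t) * BB" using Cons.prems(3) d0_gt2 by (intro mult_left_mono) auto
  finally have "real (card (FF ?x')) \<le> \<alpha> * real n" using growth_BB by simp
  then have "real (card (FF ?x')) \<le> BB" using step_back[OF l'] ok by simp
  then show ?case using Cons.IH[OF _ l' _ rest] Cons.prems(1) by auto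
qed

definition "GG = 1 + real c / t"

lemma GG_ge1: "GG \<ge> 1" unfolding GG_def using d0_gt2 by auto

lemma RL2:
  "\<forall>q\<in>set qs. q \<noteq> 0 \<Longrightarrow> length x = n \<Longrightarrow>
   real (snd (rs x qs)) \<le> real (length qs) * (1 + 2 * real c * GG ^ length qs * real (card (FF x)))"
proof (induction qs arbitrary: x)
  case Nil
  then show ?case by simp
next
  case (Cons q qs)
  let ?x' = "df x q"
  let ?m = "length qs"
  let ?f = "real (card (FF x))"
  let ?f' = "real (card (FF ?x'))"
  have q0: "q \<noteq> 0" using Cons.prems(1) by auto
  have l': "length ?x' = n" by (rule df_len)
  have g: "?f' \<le> GG * ?f" using growth[OF Cons.prems(2) q0] unfolding GG_def .
  have c0: "real c \<ge> 0" by simp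
  have Gm: "GG ^ ?m \<ge> 1" by (rule one_le_power[OF GG_ge1])
  have G0: "GG \<ge> 0" using GG_ge1 by simp
  have f0: "?f \<ge> 0" by simp
  have u1: "real (UU x) \<le> real c * ?f" using U_upper[OF Cons.prems(2)] by (metis of_nat_le_iff of_nat_mult)
  have u2: "real (UU ?x') \<le> real c * ?f'" using U_upper[OF l'] by (metis of_nat_le_iff of_nat_mult)
  have "?f \<le> GG ^ Suc ?m * ?f"
  proof -
    have "GG ^ Suc ?m \<ge> 1" by (rule one_le_power[OF GG_ge1])
    then show ?thesis using f0 by (metis mult_left_mono mult_1 mult.commute)
  qed
  moreover have "GG * ?f \<le> GG ^ Suc ?m * ?f"
  proof -
    have "GG * ?f = GG * (1 * ?f)" by simp
    also have "\<dots> \<le> GG * (GG ^ ?m * ?f)" using Gm f0 G0 by (intro mult_left_mono mult_right_mono) auto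
    finally show ?thesis by (simp add: mult.assoc)
  qed
  ultimately have A1: "?f \<le> GG ^ Suc ?m * ?f" and A2: "?f' \<le> GG ^ Suc ?m * ?f" using g by auto
  have B1: "real c * ?f \<le> real c * (GG ^ Suc ?m * ?f)" using A1 by (intro mult_left_mono) auto
  have B2: "real c * ?f' \<le> real c * (GG ^ Suc ?m * ?f)" using A2 by (intro mult_left_mono) auto
  have "real c * ?f + real c * ?f' \<le> 2 * (real c * (GG ^ Suc ?m * ?f))" using B1 B2 by linarith
  then have "real c * ?f + real c * ?f' \<le> 2 * real c * GG ^ Suc ?m * ?f" by (simp add: mult.assoc)
  then have sc: "real (step_cost R nbr C0 x ?x') \<le> 1 + 2 * real c * GG ^ Suc ?m * ?f"
    unfolding step_cost_def using u1 u2 by simp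
  have nn: "0 \<le> 1 + 2 * real c * GG ^ Suc ?m * ?f" using G0 f0 by simp
  show ?case
  proof (cases "real (UU ?x') > real c * \<gamma> * real n")
    case True
    then have "snd (rs x (q # qs)) = step_cost R nbr C0 x ?x'" by (simp add: Let_def)
    moreover have "1 * (1 + 2 * real c * GG ^ Suc ?m * ?f) \<le> real (length (q # qs)) * (1 + 2 * real c * GG ^ Suc ?m * ?f)"
      using nn by (intro mult_right_mono) auto
    ultimately show ?thesis using sc by simp
  next
    case False
    obtain r k' where rk: "rs ?x' qs = (r, k')" by (cases "rs ?x' qs") auto
    then have eq: "snd (rs x (q # qs)) = step_cost R nbr C0 x ?x' + k'" using False by (simp add: Let_def)
    have "real k' \<le> real ?m * (1 + 2 * real c * GG ^ ?m * ?f')"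
      using Cons.IH[OF _ l'] Cons.prems(1) rk by auto
    also have "\<dots> \<le> real ?m * (1 + 2 * real c * GG ^ Suc ?m * ?f)"
    proof -
      have "GG ^ ?m * ?f' \<le> GG ^ ?m * (GG * ?f)" using g by (intro mult_left_mono) (use G0 in auto)
      then have "2 * real c * (GG ^ ?m * ?f') \<le> 2 * real c * (GG ^ Suc ?m * ?f)" by (intro mult_left_mono) (auto simp: algebra_simps)
      then show ?thesis by (intro mult_left_mono) (auto simp: algebra_simps)
    qed
    finally show ?thesis using eq sc by (simp add: algebra_simps)
  qed
qed

lemma epsp_bounds: "0 \<le> epsp" "epsp \<le> 1"
proof -
  have "t * \<delta> = (\<delta> * real d0) / 2" by simp
  then have td: "t * \<delta> > 1" using dd by linarith
  have den: "t * real c * real d0 > 0" using cpos d0_gt2 by auto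
  show "0 \<le> epsp" unfolding epsp_def using td den by auto
  have "t * \<delta> - 1 \<le> t * real c * real d0"
  proof -
    have "t * \<delta> \<le> t * 1" using dle d0_gt2 by (intro mult_left_mono) auto
    also have "\<dots> \<le> t * (real c * real d0)"
    proof -
      have "1 * 1 \<le> real c * real d0" using cpos d0_gt2 by (intro mult_mono) auto
      then show ?thesis using d0_gt2 by (intro mult_left_mono) auto
    qed
    finally show ?thesis by (simp add: mult.assoc)
  qed
  then show "epsp \<le> 1" unfolding epsp_def using den by simp
qed

lemma RL3:
  "length x = n \<Longrightarrow> real (card (FF x)) \<le> \<gamma> * real n \<Longrightarrow>
   \<exists>qs r k. length qs = m \<and> set qs \<subseteq> W - {0} \<and> rs x qs = (Some r, k)
     \<and> real (card (FF r)) \<le> (1 - epsp) ^ m * real (card (FF x))"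
proof (induction m arbitrary: x)
  case 0
  then show ?case by (intro exI[of _ "[]"] exI[of _ x] exI[of _ 0]) simp
next
  case (Suc m)
  have fa: "real (card (FF x)) \<le> \<alpha> * real n" using Suc.prems(2) gn_le_BB BB_le by linarith
  obtain q where q: "q \<in> W - {0}" and pr: "real (card (FF (df x q))) \<le> (1 - epsp) * real (card (FF x))"
    using progress[OF Suc.prems(1) fa] by blast
  let ?x' = "df x q"
  have l': "length ?x' = n" by (rule df_len)
  have "(1 - epsp) * real (card (FF x)) \<le> 1 * real (card (FF x))"
    using epsp_bounds by (intro mult_right_mono) auto
  then have f'g: "real (card (FF ?x')) \<le> \<gamma> * real n" using pr Suc.prems(2) by simp
  have "real (UU ?x') \<le> real c * real (card (FF ?x'))" using U_upper[OF l'] by (metis of_nat_le_iff of_nat_mult)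
  also have "\<dots> \<le> real c * (\<gamma> * real n)" using f'g by (intro mult_left_mono) auto
  finally have ok: "\<not> real (UU ?x') > real c * \<gamma> * real n" by (simp add: mult.assoc)
  obtain qs r k where IH: "length qs = m" "set qs \<subseteq> W - {0}" "rs ?x' qs = (Some r, k)"
    "real (card (FF r)) \<le> (1 - epsp) ^ m * real (card (FF ?x'))"
    using Suc.IH[OF l' f'g] by blast
  have run: "rs x (q # qs) = (Some r, step_cost R nbr C0 x ?x' + k)"
    using ok IH(3) by (simp add: Let_def)
  have "(1 - epsp) ^ m * real (card (FF ?x')) \<le> (1 - epsp) ^ m * ((1 - epsp) * real (card (FF x)))"
    by (intro mult_left_mono[OF pr]) (use epsp_bounds in simp)
  then have "real (card (FF r)) \<le> (1 - epsp) ^ m * ((1 - epsp) * real (card (FF x)))"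
    using IH(4) by linarith
  then have "real (card (FF r)) \<le> (1 - epsp) ^ Suc m * real (card (FF x))" by (simp add: algebra_simps)
  then show ?case using run IH(1,2) q by (intro exI[of _ "q # qs"]) auto
qed

end

definition fstep :: "('q \<Rightarrow> 'a option \<times> nat) \<Rightarrow> ('a \<Rightarrow> nat) \<Rightarrow> 'q \<Rightarrow> nat \<times> 'a option \<times> nat \<Rightarrow> nat \<times> 'a option \<times> nat" where
  "fstep run u = (\<lambda>qs (kmin, xmin, cost).
                 let (r, k) = run qs in
                 (case r of
                    Some xs \<Rightarrow> if u xs < kmin
                               then (u xs, Some xs, cost + k)
                               else (kmin, xmin, cost + k)
                  | None \<Rightarrow> (kmin, xmin, cost + k)))"

lemma deepflip_alt:
  "deepflip_run n R nbr C0 c t \<gamma> seqs x =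
   (let st = fold (fstep (run_seq n R nbr C0 c t \<gamma> x) (\<lambda>xs. card (Uset R nbr C0 xs))) seqs (card R + 1, None, 0)
    in (fst (snd st), snd (snd st)))"
  unfolding deepflip_run_def fstep_def by (simp add: case_prod_beta)

lemma fstep_cost: "snd (snd (fstep run u a s)) = snd (snd s) + snd (run a)"
  unfolding fstep_def by (cases s; cases "run a"; cases "fst (run a)") auto

lemma fold_cost: "snd (snd (fold (fstep run u) L s)) = snd (snd s) + sum_list (map (\<lambda>qs. snd (run qs)) L)"
  by (induction L arbitrary: s) (auto simp: fstep_cost)

definition Pinv :: "nat \<Rightarrow> ('a \<Rightarrow> nat) \<Rightarrow> 'a set \<Rightarrow> nat \<times> 'a option \<times> nat \<Rightarrow> bool" where "Pinv N u G s \<longleftrightarrow> (fst (snd s) = None \<and> fst s = N) \<or> (\<exists>z. fst (snd s) = Some z \<and> fst s = u z \<and> z \<in> G)"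

lemma fstep_inv:
  assumes "Pinv N u G s" "\<And>z. fst (run a) = Some z \<Longrightarrow> z \<in> G"
  shows "Pinv N u G (fstep run u a s) \<and> fst (fstep run u a s) \<le> fst s
     \<and> (\<forall>z. fst (run a) = Some z \<longrightarrow> fst (fstep run u a s) \<le> u z)"
  using assms unfolding fstep_def Pinv_def
  by (cases s; cases "run a"; cases "fst (run a)") (auto simp: Let_def)

lemma fold_inv_aux:
  "\<forall>a\<in>set L. \<forall>z. fst (run a) = Some z \<longrightarrow> z \<in> G \<Longrightarrow>
   \<forall>s. Pinv N u G s \<longrightarrow> (Pinv N u G (fold (fstep run u) L s) \<and> fst (fold (fstep run u) L s) \<le> fst s
     \<and> (\<forall>a\<in>set L. \<forall>z. fst (run a) = Some z \<longrightarrow> fst (fold (fstep run u) L s) \<le> u z))"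
proof (induction L)
  case Nil
  then show ?case by simp
next
  case (Cons a L)
  note G = Cons.prems(1)
  have G': "\<forall>a\<in>set L. \<forall>z. fst (run a) = Some z \<longrightarrow> z \<in> G" using G by auto
  note IH = Cons.IH[OF G']
  show ?case
  proof (intro allI impI)
    fix s assume P: "Pinv N u G s"
    have st: "Pinv N u G (fstep run u a s) \<and> fst (fstep run u a s) \<le> fst s
       \<and> (\<forall>z. fst (run a) = Some z \<longrightarrow> fst (fstep run u a s) \<le> u z)"
    proof -
      have "\<And>z. fst (run a) = Some z \<Longrightarrow> z \<in> G" using G by auto
      then show ?thesis by (rule fstep_inv[OF P])
    qed
    note ih = mp[OF spec[OF IH, of "fstep run u a s"] conjunct1[OF st]]
    have eq: "fold (fstep run u) (a # L) s = fold (fstep run u) L (fstep run u a s)" by simp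
    show "Pinv N u G (fold (fstep run u) (a # L) s) \<and> fst (fold (fstep run u) (a # L) s) \<le> fst s
     \<and> (\<forall>b\<in>set (a # L). \<forall>z. fst (run b) = Some z \<longrightarrow> fst (fold (fstep run u) (a # L) s) \<le> u z)"
      unfolding eq
    proof (intro conjI)
      show "Pinv N u G (fold (fstep run u) L (fstep run u a s))" using ih by blast
      show "fst (fold (fstep run u) L (fstep run u a s)) \<le> fst s" using ih st by linarith
      show "\<forall>b\<in>set (a # L). \<forall>z. fst (run b) = Some z \<longrightarrow> fst (fold (fstep run u) L (fstep run u a s)) \<le> u z"
      proof (intro ballI allI impI)
        fix b z assume b: "b \<in> set (a # L)" and z: "fst (run b) = Some z"
        show "fst (fold (fstep run u) L (fstep run u a s)) \<le> u z"
        proof (cases "b = a")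
          case True
          then have "fst (fstep run u a s) \<le> u z" using st z by blast
          then show ?thesis using ih by linarith
        next
          case False
          then have "b \<in> set L" using b by auto
          then show ?thesis using ih z by blast
        qed
      qed
    qed
  qed
qed

lemma sum_list_bound:
  assumes "\<forall>a\<in>set L. real (f a) \<le> C"
  shows "real (sum_list (map f L)) \<le> real (length L) * C"
  using assms by (induction L) (auto simp: algebra_simps)


lemma pow_ceil_bound:
  fixes e A :: real
  assumes e0: "0 < e" and e1: "e < 1" and A0: "0 < A"
  shows "(1 - e) ^ nat \<lceil>ln A / ln (1 - e)\<rceil> \<le> A"
proof -
  define r where "r = ln A / ln (1 - e)"
  define m where "m = nat \<lceil>r\<rceil>"
  have l: "ln (1 - e) < 0" using e0 e1 by simp
  have "r \<le> real m" unfolding m_def by linarith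
  then have "real m * ln (1 - e) \<le> r * ln (1 - e)" using l by (intro mult_right_mono_neg) auto
  also have "\<dots> = ln A" unfolding r_def using l by simp
  finally have h: "real m * ln (1 - e) \<le> ln A" .
  have "(1 - e) ^ m = exp (real m * ln (1 - e))"
    using e1 by (simp add: exp_of_nat_mult)
  also have "\<dots> \<le> exp (ln A)" using h by simp
  also have "\<dots> = A" using A0 by simp
  finally show ?thesis unfolding m_def r_def .
qed

lemma one_plus_bound:
  fixes a f :: real
  assumes "a \<ge> 0" "f \<ge> 0"
  shows "1 + a * f \<le> (1 + a) * (1 + f)"
  using assms by (simp add: algebra_simps)

theorem theorem4p6:
  fixes c d d0 :: nat and \<alpha> \<delta> :: real and C0 :: "bool list set"
  assumes "0 < c" and "0 < d" and "0 < \<alpha>" and "\<alpha> \<le> 1" and "0 < \<delta>" and "\<delta> \<le> 1"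
    and "linear_code d C0" and "min_dist C0 d0"
    and "\<delta> * real d0 > 2"
  defines "t \<equiv> real d0 / 2"
    and "\<gamma> \<equiv> inverse (1 + real c / (real d0 / 2)) * ((\<delta> * real d0 - 1) / (real d0 - 1)) * \<alpha>"
    and "\<epsilon> \<equiv> (real d0 / 2 - 1 / \<delta>) * \<delta> / (2 * real c * (real d0 / 2) ^ 2)"
    and "s \<equiv> nat \<lceil>ln ((\<delta> * real d0 - 1) / (2 * (real d0 - 1))) / ln (1 - (real d0 / 2 - 1 / \<delta>) * \<delta> / (2 * real c * (real d0 / 2) ^ 2))\<rceil>"
  shows "\<exists>K::real. \<forall>n R nbr x y seqs.
           bipartite_expander n R nbr c d \<alpha> \<delta>
           \<and> length x = n \<and> y \<in> tanner n R nbr C0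
           \<and> real (hdist x y) \<le> \<gamma> * real n
           \<and> distinct seqs
           \<and> set seqs = {qs. length qs = s \<and> set qs \<subseteq> Wset c d0 - {0}}
           \<longrightarrow> (\<exists>x'. fst (deepflip_run n R nbr C0 c t \<gamma> seqs x) = Some x'
                    \<and> length x' = n
                    \<and> real (card (Fset n x' y)) \<le> real (card (Fset n x y)) / 2)
             \<and> real (snd (deepflip_run n R nbr C0 c t \<gamma> seqs x))
                 \<le> K * (1 + real (card (Fset n x y)))"
proof -
  define W0 where "W0 = Wset c d0 - {0}"
  define GG0 where "GG0 = 1 + real c / (real d0 / 2)"
  define K where "K = real (card W0 ^ s) * (real s * (1 + 2 * real c * GG0 ^ s))"
  define A where "A = (\<delta> * real d0 - 1) / (2 * (real d0 - 1))"
  show ?thesis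
  proof (intro exI[of _ K] allI impI)
    fix n R nbr x y seqs
    assume H: "bipartite_expander n R nbr c d \<alpha> \<delta>
           \<and> length x = n \<and> y \<in> tanner n R nbr C0
           \<and> real (hdist x y) \<le> \<gamma> * real n
           \<and> distinct seqs
           \<and> set seqs = {qs. length qs = s \<and> set qs \<subseteq> Wset c d0 - {0}}"
    then have exp: "bipartite_expander n R nbr c d \<alpha> \<delta>" and xl: "length x = n"
      and yT: "y \<in> tanner n R nbr C0" and hd: "real (hdist x y) \<le> \<gamma> * real n"
      and ds: "distinct seqs" and ss: "set seqs = {qs. length qs = s \<and> set qs \<subseteq> Wset c d0 - {0}}"
      by auto
    interpret T: tsetup n R nbr c d d0 \<alpha> \<delta> C0 y
      by unfold_locales (use assms exp yT in auto)
    define f where "f = real (card (Fset n x y))"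
    have FFx: "T.FF x = Fset n x y" unfolding T.FF_def ..
    have hdF: "hdist x y = card (Fset n x y)"
      unfolding hdist_def Fset_def using xl by simp
    have fg: "real (card (T.FF x)) \<le> \<gamma> * real n" using hd hdF FFx by simp
    have fg': "real (card (T.FF x)) \<le> inverse (1 + real c / (real d0 / 2)) * ((\<delta> * real d0 - 1) / (real d0 - 1)) * \<alpha> * real n"
      using fg unfolding \<gamma>_def .
    have epsp_eq: "(real d0 / 2 - 1 / \<delta>) * \<delta> / (2 * real c * (real d0 / 2) ^ 2) = T.epsp"
    proof -
      have nz: "\<delta> \<noteq> 0" "real c \<noteq> 0" "real d0 \<noteq> 0" using assms(1,5) T.d0_gt2 by auto
      then show ?thesis unfolding T.epsp_def by (simp add: field_simps power2_eq_square)
    qed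
    have ep0: "0 < T.epsp"
    proof -
      have "real d0 / 2 * \<delta> = (\<delta> * real d0) / 2" by simp
      then have "real d0 / 2 * \<delta> - 1 > 0" using assms(9) by linarith
      then show ?thesis unfolding T.epsp_def using assms(1) T.d0_gt2 by auto
    qed
    have ep1: "T.epsp < 1"
    proof -
      have den: "real d0 / 2 * real c * real d0 > 0" using assms(1) T.d0_gt2 by auto
      have "real d0 / 2 * \<delta> \<le> real d0 / 2 * 1" using assms(6) T.d0_gt2 by (intro mult_left_mono) auto
      also have "\<dots> \<le> real d0 / 2 * (real c * real d0)"
      proof -
        have "1 * 1 \<le> real c * real d0" using assms(1) T.d0_gt2 by (intro mult_mono) auto
        then show ?thesis using T.d0_gt2 by (intro mult_left_mono) auto
      qed
      finally have "real d0 / 2 * \<delta> - 1 < real d0 / 2 * real c * real d0" by (simp add: mult.assoc)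
      then show ?thesis unfolding T.epsp_def using den by simp
    qed
    have A0: "A > 0" unfolding A_def using assms(9) T.d0_gt2 by auto
    have powA: "(1 - T.epsp) ^ s \<le> A"
      unfolding s_def A_def[symmetric] epsp_eq by (rule pow_ceil_bound[OF ep0 ep1 A0])
    obtain qsg rg kg where g: "length qsg = s" "set qsg \<subseteq> Wset c d0 - {0}"
      "run_seq n R nbr C0 c t \<gamma> x qsg = (Some rg, kg)"
      "real (card (T.FF rg)) \<le> (1 - T.epsp) ^ s * real (card (T.FF x))"
      using T.RL3[OF xl fg', of s] unfolding t_def \<gamma>_def by blast
    have qsg_in: "qsg \<in> set seqs" using g(1,2) ss by auto
    have fBB: "real (card (T.FF x)) \<le> T.BB" using fg' T.gn_le_BB by linarith
    have rg_len: "length rg = n"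
      using T.RL1[of qsg x rg] g(2,3) xl fBB unfolding t_def \<gamma>_def by auto
    define run where "run = (\<lambda>qs. run_seq n R nbr C0 c t \<gamma> x qs)"
    define u where "u = (\<lambda>xs. card (Uset R nbr C0 xs))"
    define st where "st = fold (fstep run u) seqs (card R + 1, None, 0)"
    have df: "deepflip_run n R nbr C0 c t \<gamma> seqs x = (fst (snd st), snd (snd st))"
      unfolding deepflip_alt st_def run_def u_def Let_def ..
    define Gs where "Gs = {z. \<exists>qs\<in>set seqs. fst (run qs) = Some z}"
    have P0: "Pinv (card R + 1) u Gs (card R + 1, None, 0)" unfolding Pinv_def by simp
    have inv: "Pinv (card R + 1) u Gs st \<and> fst st \<le> fst (card R + 1, None, 0::nat)
      \<and> (\<forall>a\<in>set seqs. \<forall>z. fst (run a) = Some z \<longrightarrow> fst st \<le> u z)"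
    proof -
      have G: "\<forall>a\<in>set seqs. \<forall>z. fst (run a) = Some z \<longrightarrow> z \<in> Gs" unfolding Gs_def by auto
      note inv0 = mp[OF spec[OF fold_inv_aux[OF G]] P0]
      then show ?thesis unfolding st_def by simp
    qed
    have "fst st \<le> u rg" using inv qsg_in g(3) unfolding run_def by auto
    also have "u rg \<le> card R" unfolding u_def by (rule T.U_le_R)
    finally have "fst st < card R + 1" by simp
    then obtain z where z: "fst (snd st) = Some z" "fst st = u z" "z \<in> Gs"
      using inv unfolding Pinv_def by auto
    obtain qsz where qsz: "qsz \<in> set seqs" "fst (run qsz) = Some z" using z(3) unfolding Gs_def by auto
    have "length z = n \<and> real (card (T.FF z)) \<le> T.BB"
      using T.RL1[of qsz x z] qsz ss xl fBB unfolding run_def t_def \<gamma>_def by auto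
    then have zl: "length z = n" and zB: "real (card (T.FF z)) \<le> T.BB" by auto
    have za: "real (card (T.FF z)) \<le> \<alpha> * real n" using zB T.BB_le by linarith
    have low: "real c * real (card (T.FF z)) * (\<delta> * real d0 - 1) \<le> (real d0 - 1) * real (u z)"
      using T.U_lower[OF zl za] unfolding u_def .
    have "u z \<le> u rg" using inv qsg_in g(3) z(2) unfolding run_def by auto
    also have "u rg \<le> c * card (T.FF rg)" unfolding u_def by (rule T.U_upper[OF rg_len])
    finally have "real (u z) \<le> real c * real (card (T.FF rg))" by (metis of_nat_le_iff of_nat_mult)
    also have "\<dots> \<le> real c * ((1 - T.epsp) ^ s * f)"
      using g(4) FFx unfolding f_def by (intro mult_left_mono) auto
    also have "\<dots> \<le> real c * (A * f)"
      using powA unfolding f_def by (intro mult_left_mono mult_right_mono) auto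
    finally have uz: "real (u z) \<le> real c * (A * f)" .
    have d1: "real d0 - 1 > 0" using T.d0_gt2 by simp
    have "real c * real (card (T.FF z)) * (\<delta> * real d0 - 1) \<le> (real d0 - 1) * (real c * (A * f))"
      using low uz d1 by (meson order_trans mult_left_mono less_imp_le)
    also have "\<dots> = real c * (f / 2) * (\<delta> * real d0 - 1)" unfolding A_def using d1 by (simp add: field_simps)
    finally have "real c * real (card (T.FF z)) * (\<delta> * real d0 - 1) \<le> real c * (f / 2) * (\<delta> * real d0 - 1)" .
    moreover have "real c * (\<delta> * real d0 - 1) > 0" using assms(1,9) by auto
    ultimately have zhalf: "real (card (T.FF z)) \<le> f / 2"
      by (metis (no_types, lifting) mult.commute mult.left_commute mult_le_cancel_left_pos)
    have part1: "\<exists>x'. fst (deepflip_run n R nbr C0 c t \<gamma> seqs x) = Some x'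
                    \<and> length x' = n \<and> real (card (Fset n x' y)) \<le> real (card (Fset n x y)) / 2"
      using df z(1) zl zhalf unfolding T.FF_def f_def by auto
    have cost_eq: "snd (deepflip_run n R nbr C0 c t \<gamma> seqs x) = sum_list (map (\<lambda>qs. snd (run qs)) seqs)"
      using df fold_cost[of run u seqs "(card R + 1, None, 0)"] unfolding st_def by simp
    have each: "\<forall>qs\<in>set seqs. real (snd (run qs)) \<le> real s * (1 + 2 * real c * GG0 ^ s * f)"
    proof
      fix qs assume qs: "qs \<in> set seqs"
      then have "length qs = s" "\<forall>q\<in>set qs. q \<noteq> 0" using ss by auto
      then show "real (snd (run qs)) \<le> real s * (1 + 2 * real c * GG0 ^ s * f)"
        using T.RL2[of qs x] xl FFx unfolding run_def t_def \<gamma>_def GG0_def T.GG_def f_def by auto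
    qed
    have lenseq: "length seqs = card W0 ^ s"
    proof -
      have "length seqs = card (set seqs)" using distinct_card[OF ds] by simp
      also have "set seqs = {xs. set xs \<subseteq> W0 \<and> length xs = s}" using ss unfolding W0_def by auto
      also have "card \<dots> = card W0 ^ s" by (rule card_lists_length_eq) (simp add: W0_def T.W_fin)
      finally show ?thesis .
    qed
    have "real (snd (deepflip_run n R nbr C0 c t \<gamma> seqs x)) \<le> real (length seqs) * (real s * (1 + 2 * real c * GG0 ^ s * f))"
      unfolding cost_eq by (rule sum_list_bound[OF each])
    also have "\<dots> \<le> real (length seqs) * (real s * ((1 + 2 * real c * GG0 ^ s) * (1 + f)))"
    proof -
      have G0: "GG0 \<ge> 0" unfolding GG0_def by simp
      have "1 + (2 * real c * GG0 ^ s) * f \<le> (1 + 2 * real c * GG0 ^ s) * (1 + f)"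
        by (rule one_plus_bound) (use G0 f_def in auto)
      then show ?thesis by (intro mult_left_mono) auto
    qed
    also have "\<dots> = K * (1 + f)" unfolding K_def lenseq by simp
    finally have part2: "real (snd (deepflip_run n R nbr C0 c t \<gamma> seqs x)) \<le> K * (1 + real (card (Fset n x y)))"
      unfolding f_def .
    show "(\<exists>x'. fst (deepflip_run n R nbr C0 c t \<gamma> seqs x) = Some x'
                    \<and> length x' = n
                    \<and> real (card (Fset n x' y)) \<le> real (card (Fset n x y)) / 2)
             \<and> real (snd (deepflip_run n R nbr C0 c t \<gamma> seqs x))
                 \<le> K * (1 + real (card (Fset n x y)))"
      using part1 part2 by blast
  qed
qed

end
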